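(* Let $\widehat{A}=A+\epsilon B$ and $\widehat{C}=C+\epsilon D$ with $A,B,C,D\in\mathbb{R}^{n\times n}$ be such that the dual core generalized inverses of $\widehat{A}$, $\widehat{C}$ and $\widehat{A}\widehat{C}$ exist and have the particular form $\widehat{A}^{\oplus}=A^{\oplus}-\epsilon A^{\oplus}BA^{\oplus}$, $\widehat{C}^{\oplus}=C^{\oplus}-\epsilon C^{\oplus}DC^{\oplus}$, $(\widehat{A}\widehat{C})^{\oplus}=(AC)^{\oplus}-\epsilon (AC)^{\oplus}(AD+BC)(AC)^{\oplus}$. If $AC=CA$, $A^*C=CA^*$, $C^{\oplus}B=BC^{\oplus}$ and $A^{\oplus}D=DA^{\oplus}$, then $(\widehat{A}\widehat{C})^{\oplus}=\widehat{A}^{\oplus}\widehat{C}^{\oplus}=\widehat{C}^{\oplus}\widehat{A}^{\oplus}$.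
   Context: A dual number is $a+\epsilon b$ with $a,b\in\mathbb{R}$, where $\epsilon\neq 0$, $\epsilon^2=0$ and $\epsilon$ commutes with reals. A dual matrix is $A+\epsilon B$ with $A,B$ real; sums and products are computed formally using $\epsilon^2=0$, transposition is $(A+\epsilon B)^T=A^T+\epsilon B^T$, and equality means equality of real and dual parts. $A^*$ denotes the (conjugate) transpose of a real matrix. For a real square matrix $A$ of index at most $1$, $A^{\oplus}$ denotes its core inverse, the unique matrix $G$ with $AGA=A$, $AG^2=G$, $(AG)^T=AG$. For a square dual matrix $\widehat{A}$ of dual index $1$, the dual core generalized inverse (DCGI) $\widehat{A}^{\oplus}$ is the dual matrix $\widehat{X}$ (if it exists) with $\widehat{A}\widehat{X}\widehat{A}=\widehat{A}$, $\widehat{A}\widehat{X}^2=\widehat{X}$, $(\widehat{A}\widehat{X})^T=\widehat{A}\widehat{X}$. *)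

theory Defs
  imports "HOL-Analysis.Analysis"
begin

text \<open>Real square matrices are of type real^'n^'n (n = CARD('n)).
A dual matrix A + eps B is represented by the pair (A, B).\<close>

type_synonym 'n dmat = "(real^'n^'n) \<times> (real^'n^'n)"

definition dmult :: "'n::finite dmat \<Rightarrow> 'n dmat \<Rightarrow> 'n dmat" where
  "dmult X Y = (fst X ** fst Y, fst X ** snd Y + snd X ** fst Y)"

definition dtranspose :: "'n::finite dmat \<Rightarrow> 'n dmat" where
  "dtranspose X = (transpose (fst X), transpose (snd X))"

definition is_core_inverse :: "real^'n^'n \<Rightarrow> real^'n^'n \<Rightarrow> bool" where
  "is_core_inverse A G \<longleftrightarrow> A ** G ** A = A \<and> A ** (G ** G) = G \<and> transpose (A ** G) = A ** G"

definition has_core_inverse :: "real^'n^'n \<Rightarrow> bool" where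
  "has_core_inverse A \<longleftrightarrow> (\<exists>G. is_core_inverse A G)"

definition core_inv :: "real^'n^'n \<Rightarrow> real^'n^'n" where
  "core_inv A = (THE G. is_core_inverse A G)"

definition is_dcgi :: "'n::finite dmat \<Rightarrow> 'n dmat \<Rightarrow> bool" where
  "is_dcgi Ah X \<longleftrightarrow> dmult (dmult Ah X) Ah = Ah \<and> dmult Ah (dmult X X) = X
     \<and> dtranspose (dmult Ah X) = dmult Ah X"

definition dcgi_form :: "'n::finite dmat \<Rightarrow> 'n dmat" where
  "dcgi_form Ah = (core_inv (fst Ah), - (core_inv (fst Ah) ** snd Ah ** core_inv (fst Ah)))"

end

theory Submission
  imports Defs
begin


lemma range_sq_eq:
  fixes M :: "real^'n^'n"
  assumes "M = M ** (M ** W)"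
  shows "range ((*v) (transpose M ** transpose M)) = range ((*v) (transpose M))"
proof -
  have r1: "rank (M ** M) \<le> rank M" by (rule rank_mul_le_left)
  have "rank M = rank ((M ** M) ** W)" using assms by (simp add: matrix_mul_assoc)
  also have "\<dots> \<le> rank (M ** M)" by (rule rank_mul_le_left)
  finally have r: "rank (M ** M) = rank M" using r1 by simp
  show ?thesis
  proof (rule subspace_dim_equal)
    show "subspace (range ((*v) (transpose M ** transpose M)))"
      by (metis linear_subspace_image matrix_vector_mul_linear subspace_UNIV)
    show "subspace (range ((*v) (transpose M)))"
      by (metis linear_subspace_image matrix_vector_mul_linear subspace_UNIV)
    show "range ((*v) (transpose M ** transpose M)) \<subseteq> range ((*v) (transpose M))"
      by (metis image_subsetI matrix_vector_mul_assoc rangeI)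
    have "dim (range ((*v) (transpose M ** transpose M))) = rank (transpose M ** transpose M)"
      by (simp add: rank_dim_range)
    also have "\<dots> = rank (M ** M)" by (metis matrix_transpose_mul rank_transpose)
    also have "\<dots> = rank (transpose M)" using r by (simp add: rank_transpose)
    also have "\<dots> = dim (range ((*v) (transpose M)))" by (simp add: rank_dim_range)
    finally show "dim (range ((*v) (transpose M))) \<le> dim (range ((*v) (transpose M ** transpose M)))" by simp
  qed
qed

lemma ker_vec:
  fixes M :: "real^'n^'n"
  assumes "M = M ** (M ** W)" and "M *v (M *v v) = 0"
  shows "M *v v = 0"
proof -
  let ?T = "transpose M"
  have key: "\<And>x. (M *v v) \<bullet> x = 0"
  proof -
    fix x
    have "?T *v x \<in> range ((*v) (?T ** ?T))" using range_sq_eq[OF assms(1)] by auto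
    then obtain y where y: "?T *v x = (?T ** ?T) *v y" by auto
    have "(M *v v) \<bullet> x = v \<bullet> (?T *v x)"
      by (metis dot_lmul_matrix vector_transpose_matrix)
    also have "\<dots> = v \<bullet> (?T *v (?T *v y))" by (metis y matrix_vector_mul_assoc)
    also have "\<dots> = (M *v v) \<bullet> (?T *v y)"
      by (metis dot_lmul_matrix vector_transpose_matrix)
    also have "\<dots> = (M *v (M *v v)) \<bullet> y"
      by (metis dot_lmul_matrix vector_transpose_matrix)
    finally show "(M *v v) \<bullet> x = 0" using assms(2) by simp
  qed
  show ?thesis using key[of "M *v v"] by simp
qed

lemma ker_mat:
  fixes M :: "real^'n^'n"
  assumes "M = M ** (M ** W)" and "M ** (M ** U) = M ** (M ** V)"
  shows "M ** U = M ** V"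
proof -
  have "\<And>x. (M ** U) *v x = (M ** V) *v x"
  proof -
    fix x
    have "M *v (M *v (U *v x - V *v x)) = 0"
      using assms(2) by (simp add: matrix_vector_mult_diff_distrib matrix_vector_mul_assoc)
    then have "M *v (U *v x - V *v x) = 0" by (rule ker_vec[OF assms(1)])
    then show "(M ** U) *v x = (M ** V) *v x"
      by (simp add: matrix_vector_mult_diff_distrib matrix_vector_mul_assoc)
  qed
  then show ?thesis by (simp add: matrix_eq)
qed



lemma mneg_r: "(X::real^'n^'n) ** (- Y) = - (X ** Y)"
  by (simp add: matrix_matrix_mult_def vec_eq_iff sum_negf)
lemma mneg_l: "(- X::real^'n^'n) ** Y = - (X ** Y)"
  by (simp add: matrix_matrix_mult_def vec_eq_iff sum_negf)
lemma madd_r: "((X::real^'n^'n) + Y) ** Z = X ** Z + Y ** Z"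
  by (simp add: matrix_matrix_mult_def vec_eq_iff sum.distrib distrib_right)

lemma core_rules:
  fixes A G :: "real^'n^'n"
  assumes "is_core_inverse A G"
  shows "A ** G ** A = A" "A ** G ** G = G" "X ** A ** G ** A = X ** A" "X ** A ** G ** G = X ** G"
    "transpose (A ** G) = A ** G"
proof -
  have h1: "A ** (G ** A) = A" and h2: "A ** (G ** G) = G" and t: "transpose (A ** G) = A ** G"
    using assms by (auto simp: is_core_inverse_def matrix_mul_assoc)
  show "A ** G ** A = A" "A ** G ** G = G" "transpose (A ** G) = A ** G"
    using h1 h2 t by (simp_all add: matrix_mul_assoc)
  show "X ** A ** G ** A = X ** A" "X ** A ** G ** G = X ** G"
    by (simp_all add: matrix_mul_assoc[symmetric] h1 h2)
qed

lemma core_GAA: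
  fixes A G :: "real^'n^'n"
  assumes "is_core_inverse A G"
  shows "G ** A ** A = A"
proof -
  note r = core_rules[OF assms]
  have W: "A = A ** (A ** (G ** G ** A))"
  proof -
    have "A ** (A ** (G ** G ** A)) = A ** A ** G ** G ** A" by (simp add: matrix_mul_assoc)
    also have "\<dots> = A ** G ** A" by (simp only: r(4))
    also have "\<dots> = A" by (simp only: r(1))
    finally show ?thesis by simp
  qed
  have e1: "A ** (G ** G ** A ** A) = G ** A ** A" by (simp add: matrix_mul_assoc r)
  have e2: "A ** (A ** G ** G ** A) = A" using W by (simp add: matrix_mul_assoc)
  have "A ** (A ** (G ** G ** A ** A)) = A ** (A ** (A ** G ** G ** A))"
    by (simp add: matrix_mul_assoc r)
  from ker_mat[OF W this] show ?thesis
    by (simp add: e1 e2)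
qed

lemma core_cancel:
  fixes A G :: "real^'n^'n"
  assumes "is_core_inverse A G" and "A ** X = A ** Y" and "X = A ** U" and "Y = A ** V"
  shows "X = Y"
proof -
  have g: "G ** (A ** (A ** W)) = A ** W" for W
    using core_GAA[OF assms(1)] by (metis matrix_mul_assoc)
  have "X = G ** (A ** X)" using g[of U] assms(3) by simp
  also have "\<dots> = G ** (A ** Y)" by (simp only: assms(2))
  also have "\<dots> = Y" using g[of V] assms(4) by simp
  finally show ?thesis .
qed

lemma core_unique:
  fixes A G1 G2 :: "real^'n^'n"
  assumes c1: "is_core_inverse A G1" and c2: "is_core_inverse A G2"
  shows "G1 = G2"
proof -
  note r1 = core_rules[OF c1] and r2 = core_rules[OF c2]
  have p12: "A ** G2 ** (A ** G1) = A ** G1" by (simp add: matrix_mul_assoc r2)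
  have p21: "A ** G1 ** (A ** G2) = A ** G2" by (simp add: matrix_mul_assoc r1)
  have "A ** G1 = transpose (A ** G2 ** (A ** G1))" using p12 r1(5) by simp
  also have "\<dots> = A ** G1 ** (A ** G2)" by (subst matrix_transpose_mul) (simp only: r1(5) r2(5))
  also have "\<dots> = A ** G2" by (rule p21)
  finally have eq: "A ** G1 = A ** G2" .
  have b1: "G1 = A ** (G1 ** G1)" and b2: "G2 = A ** (G2 ** G2)"
    using r1(2) r2(2) by (simp_all add: matrix_mul_assoc)
  show ?thesis
    by (rule core_cancel[OF c1 eq b1 b2])
qed

lemma core_inv_eq:
  fixes A G :: "real^'n^'n"
  assumes "is_core_inverse A G" shows "core_inv A = G"
  unfolding core_inv_def using assms core_unique by blast

lemma core_inv_is:
  fixes A :: "real^'n^'n"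
  assumes "has_core_inverse A" shows "is_core_inverse A (core_inv A)"
  using assms core_inv_eq unfolding has_core_inverse_def by metis

lemma core_comm:
  fixes A G X :: "real^'n^'n"
  assumes c: "is_core_inverse A G" and xa: "X ** A = A ** X"
    and xt: "X ** transpose A = transpose A ** X"
  shows "X ** G = G ** X"
proof -
  note r = core_rules[OF c]
  have gen: "Y ** (A ** G) = A ** G ** Y ** (A ** G)" if ya: "Y ** A = A ** Y" for Y :: "real^'n^'n"
  proof -
    have "A ** G ** Y ** (A ** G) = A ** G ** (Y ** A) ** G" by (simp add: matrix_mul_assoc)
    also have "\<dots> = A ** G ** A ** Y ** G" by (simp add: ya matrix_mul_assoc)
    also have "\<dots> = A ** Y ** G" by (simp only: r(1))
    also have "\<dots> = Y ** (A ** G)" by (simp add: ya[symmetric] matrix_mul_assoc)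
    finally show ?thesis by simp
  qed
  have e1: "X ** (A ** G) = A ** G ** X ** (A ** G)" by (rule gen[OF xa])
  have xta: "transpose X ** A = A ** transpose X"
    by (metis xt matrix_transpose_mul transpose_transpose)
  have e0: "transpose X ** (A ** G) = A ** G ** transpose X ** (A ** G)" by (rule gen[OF xta])
  define P where "P = A ** G"
  have tP: "transpose P = P" using r(5) by (simp add: P_def)
  have "transpose (transpose X ** P) = transpose (P ** transpose X ** P)" using e0 by (simp add: P_def)
  then have "P ** X = P ** X ** P" by (simp add: matrix_transpose_mul tP matrix_mul_assoc)
  then have e2: "A ** G ** X = A ** G ** X ** (A ** G)" by (simp add: P_def)
  have p: "X ** (A ** G) = A ** G ** X" using e1 e2 by simp
  have l1: "A ** (X ** G) = A ** G ** X"
    using p xa by (simp add: matrix_mul_assoc)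
  have l2: "A ** (G ** X) = A ** G ** X" by (simp add: matrix_mul_assoc)
  have r1: "X ** G = A ** (X ** G ** G)"
  proof -
    have "X ** G = X ** A ** G ** G" by (simp only: r(4))
    also have "\<dots> = A ** (X ** G ** G)" by (simp add: xa matrix_mul_assoc)
    finally show ?thesis .
  qed
  have r2: "G ** X = A ** (G ** G ** X)"
    using r(2) by (simp add: matrix_mul_assoc)
  show ?thesis by (rule core_cancel[OF c _ r1 r2]) (simp add: l1 l2)
qed



lemma swapc: "X ** Y = Y ** X \<Longrightarrow> Z ** X ** Y = Z ** Y ** X"
  for X Y Z :: "real^'n^'n" by (metis matrix_mul_assoc)

theorem mainTheorem9:
  fixes A B C D :: "real^'n^'n"
  assumes "has_core_inverse A" and "has_core_inverse C" and "has_core_inverse (A ** C)"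
    and "is_dcgi (A, B) (dcgi_form (A, B))"
    and "is_dcgi (C, D) (dcgi_form (C, D))"
    and "is_dcgi (dmult (A, B) (C, D)) (dcgi_form (dmult (A, B) (C, D)))"
    and "A ** C = C ** A"
    and "transpose A ** C = C ** transpose A"
    and "core_inv C ** B = B ** core_inv C"
    and "core_inv A ** D = D ** core_inv A"
  shows "dcgi_form (dmult (A, B) (C, D)) = dmult (dcgi_form (A, B)) (dcgi_form (C, D))
    \<and> dmult (dcgi_form (A, B)) (dcgi_form (C, D)) = dmult (dcgi_form (C, D)) (dcgi_form (A, B))"
proof -
  define G where "G = core_inv A"
  define H where "H = core_inv C"
  have cG: "is_core_inverse A G" unfolding G_def by (rule core_inv_is[OF assms(1)])
  have cH: "is_core_inverse C H" unfolding H_def by (rule core_inv_is[OF assms(2)])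
  note rG = core_rules[OF cG] and rH = core_rules[OF cH]
  have ac: "A ** C = C ** A" by (rule assms(7))
  have atc: "C ** transpose A = transpose A ** C" using assms(8) by simp
  have HB: "H ** B = B ** H" using assms(9) by (simp add: H_def)
  have GD: "G ** D = D ** G" using assms(10) by (simp add: G_def)
  have act: "A ** transpose C = transpose C ** A"
    by (metis assms(8) matrix_transpose_mul transpose_transpose)
  have atct: "transpose C ** transpose A = transpose A ** transpose C"
    by (metis ac matrix_transpose_mul)
  have GC: "C ** G = G ** C" by (rule core_comm[OF cG ac[symmetric] atc])
  have AH: "A ** H = H ** A" by (rule core_comm[OF cH ac act])
  have GCt: "transpose C ** G = G ** transpose C" by (rule core_comm[OF cG act[symmetric] atct])
  have GH: "G ** H = H ** G" by (rule core_comm[OF cH GC[symmetric] GCt[symmetric]])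
  have cK: "is_core_inverse (A ** C) (G ** H)"
  proof -
    have 1: "A ** C ** (G ** H) ** (A ** C) = A ** C"
    proof -
      have "A ** C ** (G ** H) ** (A ** C) = A ** (C ** G) ** (H ** A) ** C" by (simp add: matrix_mul_assoc)
      also have "\<dots> = A ** G ** (C ** A) ** H ** C" by (simp add: GC AH[symmetric] matrix_mul_assoc)
      also have "\<dots> = A ** G ** A ** (C ** H ** C)" by (simp add: ac[symmetric] matrix_mul_assoc)
      also have "\<dots> = A ** C" by (simp add: rG(1) rH(1))
      finally show ?thesis .
    qed
    have 2: "A ** C ** (G ** H ** (G ** H)) = G ** H"
    proof -
      have "A ** C ** (G ** H ** (G ** H)) = A ** C ** G ** (H ** G) ** H" by (simp add: matrix_mul_assoc)
      also have "\<dots> = A ** (C ** G) ** G ** H ** H" by (simp add: GH[symmetric] matrix_mul_assoc)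
      also have "\<dots> = A ** G ** (C ** G) ** H ** H" by (simp add: swapc[OF GC] matrix_mul_assoc)
      also have "\<dots> = (A ** G ** G) ** (C ** H ** H)" by (simp add: swapc[OF GC] matrix_mul_assoc)
      also have "\<dots> = G ** H" by (simp add: rG(2) rH(2))
      finally show ?thesis .
    qed
    have e: "A ** C ** (G ** H) = (A ** G) ** (C ** H)"
      by (simp add: swapc[OF GC] matrix_mul_assoc)
    have e2: "(C ** H) ** (A ** G) = (A ** G) ** (C ** H)"
    proof -
      have "(C ** H) ** (A ** G) = C ** (H ** A) ** G" by (simp add: matrix_mul_assoc)
      also have "\<dots> = C ** A ** (H ** G)" by (simp add: AH[symmetric] matrix_mul_assoc)
      also have "\<dots> = A ** (C ** G) ** H" by (simp add: GH[symmetric] ac matrix_mul_assoc)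
      also have "\<dots> = (A ** G) ** (C ** H)" by (simp add: GC matrix_mul_assoc)
      finally show ?thesis .
    qed
    have 3: "transpose (A ** C ** (G ** H)) = A ** C ** (G ** H)"
    proof -
      have "transpose ((A ** G) ** (C ** H)) = transpose (C ** H) ** transpose (A ** G)"
        by (rule matrix_transpose_mul)
      then show ?thesis by (simp only: e rH(5) rG(5) e2)
    qed
    show ?thesis using 1 2 3 by (simp add: is_core_inverse_def)
  qed
  have K: "core_inv (A ** C) = G ** H" by (rule core_inv_eq[OF cK])
  have GAG: "G ** A ** G = G"
  proof -
    have "G ** A ** G = G ** A ** (A ** G ** G)" by (simp add: rG(2))
    also have "\<dots> = (G ** A ** A) ** G ** G" by (simp add: matrix_mul_assoc)
    also have "\<dots> = G" by (simp add: core_GAA[OF cG] rG(2))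
    finally show ?thesis .
  qed
  have HCH: "H ** C ** H = H"
  proof -
    have "H ** C ** H = H ** C ** (C ** H ** H)" by (simp add: rH(2))
    also have "\<dots> = (H ** C ** C) ** H ** H" by (simp add: matrix_mul_assoc)
    also have "\<dots> = H" by (simp add: core_GAA[OF cH] rH(2))
    finally show ?thesis .
  qed
  have t1: "G ** H ** (A ** D) ** (G ** H) = G ** H ** D ** H"
  proof -
    have "G ** H ** (A ** D) ** (G ** H) = G ** (H ** A) ** (D ** G) ** H" by (simp add: matrix_mul_assoc)
    also have "\<dots> = G ** A ** (H ** G) ** D ** H" by (simp add: AH[symmetric] GD[symmetric] matrix_mul_assoc)
    also have "\<dots> = (G ** A ** G) ** H ** D ** H" by (simp add: GH[symmetric] matrix_mul_assoc)
    also have "\<dots> = G ** H ** D ** H" by (simp only: GAG)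
    finally show ?thesis .
  qed
  have t2: "G ** H ** (B ** C) ** (G ** H) = G ** B ** G ** H"
  proof -
    have "G ** H ** (B ** C) ** (G ** H) = G ** (H ** B) ** (C ** G) ** H" by (simp add: matrix_mul_assoc)
    also have "\<dots> = G ** B ** (H ** G) ** (C ** H)" by (simp add: HB GC matrix_mul_assoc)
    also have "\<dots> = G ** B ** G ** (H ** C ** H)" by (simp add: swapc[OF GH[symmetric]] matrix_mul_assoc)
    also have "\<dots> = G ** B ** G ** H" by (simp only: HCH)
    finally show ?thesis .
  qed
  have t3: "H ** D ** H ** G = G ** H ** D ** H"
  proof -
    have "H ** D ** H ** G = H ** D ** (G ** H)" by (simp add: GH matrix_mul_assoc)
    also have "\<dots> = H ** (G ** D) ** H" by (simp add: GD matrix_mul_assoc)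
    also have "\<dots> = G ** H ** D ** H" by (simp add: GH matrix_mul_assoc)
    finally show ?thesis .
  qed
  have t4: "H ** G ** B ** G = G ** B ** G ** H"
  proof -
    have "H ** G ** B ** G = G ** (H ** B) ** G" by (simp add: GH matrix_mul_assoc)
    also have "\<dots> = G ** B ** (G ** H)" by (simp add: HB GH matrix_mul_assoc)
    also have "\<dots> = G ** B ** G ** H" by (simp add: matrix_mul_assoc)
    finally show ?thesis .
  qed
  have X1: "- (G ** H ** (A ** D + B ** C) ** (G ** H)) = - (G ** H ** D ** H + G ** B ** G ** H)"
    by (simp only: matrix_add_ldistrib madd_r t1 t2)
  have X2: "G ** - (H ** D ** H) + - (G ** B ** G) ** H = - (G ** H ** D ** H + G ** B ** G ** H)"
    by (simp add: mneg_r mneg_l matrix_mul_assoc)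
  have X3: "H ** - (G ** B ** G) + - (H ** D ** H) ** G = - (H ** D ** H ** G + H ** G ** B ** G)"
    by (simp add: mneg_r mneg_l matrix_mul_assoc)
  show ?thesis
    unfolding dcgi_form_def dmult_def
    apply (simp add: K[folded G_def H_def] G_def[symmetric] H_def[symmetric])
    apply (simp only: X1 X2 X3 t3 t4)
    apply (simp add: GH)
    done
qed

end
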